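(* Let $X$ be a first countable, connected, locally path connected space, $n\in\mathbb{N}$, and let $A_1,\dots,A_n$ be pairwise disjoint, path connected, closed subsets of $X$. Let $p:X\to X/(A_1,\dots,A_n)$ be the associated quotient map. Then for every $a\in\bigcup_{i=1}^nA_i$, with $*=p(a)$, $\overline{p_*\pi_1^{top}(X,a)}=\pi_1^{top}(X/(A_1,\dots,A_n),* )$.
   Context: For subsets $A_1,\dots,A_n$ of a space $X$, $X/(A_1,\dots,A_n)$ denotes the quotient space obtained by collapsing each $A_i$ to a point, with quotient map $p$. $\pi_1^{top}(X,x)$ is $\pi_1(X,x)$ with the quotient topology from the loop space $\Omega(X,x)$ with the compact-open topology; $p_*$ is the induced continuous homomorphism. *)

theory Defs
  imports "HOL-Analysis.Analysis"
begin

definition quot_top :: "'a topology \<Rightarrow> ('a \<Rightarrow> 'b) \<Rightarrow> 'b topology" where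
  "quot_top X f = topology (\<lambda>U. U \<subseteq> f ` topspace X \<and> openin X {x \<in> topspace X. f x \<in> U})"

text \<open>X/(A_1,...,A_n): each point is sent to the A_i containing it, or to its singleton.\<close>
definition collapse_pt :: "nat \<Rightarrow> (nat \<Rightarrow> 'a set) \<Rightarrow> 'a \<Rightarrow> 'a set" where
  "collapse_pt n A x = (if \<exists>i\<in>{1..n}. x \<in> A i then A (SOME i. i \<in> {1..n} \<and> x \<in> A i) else {x})"

definition collapse_space :: "'a topology \<Rightarrow> nat \<Rightarrow> (nat \<Rightarrow> 'a set) \<Rightarrow> 'a set topology" where
  "collapse_space X n A = quot_top X (collapse_pt n A)"

definition loops :: "'a topology \<Rightarrow> 'a \<Rightarrow> (real \<Rightarrow> 'a) set" where
  "loops X x = {g. pathin X g \<and> g 0 = x \<and> g 1 = x}"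

definition loop_space :: "'a topology \<Rightarrow> 'a \<Rightarrow> (real \<Rightarrow> 'a) topology" where
  "loop_space X x = subtopology
     (topology_generated_by {{g. g ` K \<subseteq> U} | K U. compactin (top_of_set {0..1}) K \<and> openin X U})
     (loops X x)"

definition path_homotopic :: "'a topology \<Rightarrow> (real \<Rightarrow> 'a) \<Rightarrow> (real \<Rightarrow> 'a) \<Rightarrow> bool" where
  "path_homotopic X p q = homotopic_with (\<lambda>r. r 0 = p 0 \<and> r 1 = p 1) (top_of_set {0..1}) X p q"

definition loop_class :: "'a topology \<Rightarrow> 'a \<Rightarrow> (real \<Rightarrow> 'a) \<Rightarrow> (real \<Rightarrow> 'a) set" where
  "loop_class X x g = {h \<in> loops X x. path_homotopic X g h}"

definition pi1_top :: "'a topology \<Rightarrow> 'a \<Rightarrow> (real \<Rightarrow> 'a) set topology" where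
  "pi1_top X x = quot_top (loop_space X x) (loop_class X x)"

definition induced_image :: "'a topology \<Rightarrow> 'b topology \<Rightarrow> ('a \<Rightarrow> 'b) \<Rightarrow> 'a \<Rightarrow> (real \<Rightarrow> 'b) set set" where
  "induced_image X Y f x = (\<lambda>g. loop_class Y (f x) (f \<circ> g)) ` loops X x"

end

theory Submission
  imports Defs
begin

lemma quot_top_openin:
  "openin (quot_top X f) U \<longleftrightarrow> U \<subseteq> f ` topspace X \<and> openin X {x \<in> topspace X. f x \<in> U}"
proof -
  define L where "L = (\<lambda>U. U \<subseteq> f ` topspace X \<and> openin X {x \<in> topspace X. f x \<in> U})"
  have i1: "L (S \<inter> T)" if S: "L S" and T: "L T" for S T
  proof -
    have "{x \<in> topspace X. f x \<in> S \<inter> T} = {x \<in> topspace X. f x \<in> S} \<inter> {x \<in> topspace X. f x \<in> T}" by auto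
    with S T show ?thesis unfolding L_def by auto
  qed
  have i2: "L (\<Union>K)" if K: "\<forall>S\<in>K. L S" for K
  proof -
    have "{x \<in> topspace X. f x \<in> \<Union>K} = \<Union>((\<lambda>S. {x \<in> topspace X. f x \<in> S}) ` K)" by auto
    moreover have "openin X (\<Union>((\<lambda>S. {x \<in> topspace X. f x \<in> S}) ` K))" using K unfolding L_def by auto
    ultimately show ?thesis using K unfolding L_def by auto
  qed
  have "istopology L" unfolding istopology_def using i1 i2 by blast
  then have "openin (quot_top X f) = L" unfolding quot_top_def L_def by simp
  then show ?thesis unfolding L_def by simp
qed

lemma quot_top_topspace: "topspace (quot_top X f) = f ` topspace X"
proof -
  have "{x \<in> topspace X. f x \<in> f ` topspace X} = topspace X" by auto
  then have "openin (quot_top X f) (f ` topspace X)"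
    unfolding quot_top_openin by simp
  then have "f ` topspace X \<subseteq> topspace (quot_top X f)" by (rule openin_subset)
  moreover have "topspace (quot_top X f) \<subseteq> f ` topspace X"
    using quot_top_openin[of X f "topspace (quot_top X f)"] by auto
  ultimately show ?thesis by auto
qed

lemma quot_top_cont: "continuous_map X (quot_top X f) f"
  unfolding continuous_map_def quot_top_topspace
  by (auto simp: quot_top_openin)

lemma gen_top_local:
  assumes "generate_topology_on S Ov" "x \<in> Ov"
  shows "\<exists>F. finite F \<and> F \<subseteq> S \<and> x \<in> \<Inter>F \<and> \<Inter>F \<subseteq> Ov"
  using assms
proof (induction arbitrary: x rule: generate_topology_on.induct)
  case Empty then show ?case by simp
next
  case (Int a b)
  from Int.prems have "x \<in> a" "x \<in> b" by auto
  obtain F1 where F1: "finite F1 \<and> F1 \<subseteq> S \<and> x \<in> \<Inter>F1 \<and> \<Inter>F1 \<subseteq> a"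
    using Int.IH(1)[OF \<open>x \<in> a\<close>] by blast
  obtain F2 where F2: "finite F2 \<and> F2 \<subseteq> S \<and> x \<in> \<Inter>F2 \<and> \<Inter>F2 \<subseteq> b"
    using Int.IH(2)[OF \<open>x \<in> b\<close>] by blast
  show ?case using F1 F2 by (intro exI[of _ "F1 \<union> F2"]) auto
next
  case (UN K)
  then obtain k where "k \<in> K" "x \<in> k" by blast
  obtain F where F: "finite F \<and> F \<subseteq> S \<and> x \<in> \<Inter>F \<and> \<Inter>F \<subseteq> k"
    using UN.IH[OF \<open>k \<in> K\<close> \<open>x \<in> k\<close>] by blast
  have "\<Inter>F \<subseteq> \<Union>K" using F \<open>k \<in> K\<close> by blast
  with F show ?case by blast
next
  case (Basis s)
  then show ?case by (intro exI[of _ "{s}"]) auto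
qed

context
  fixes n :: nat and A :: "nat \<Rightarrow> 'a set"
begin

lemma cp_in:
  assumes disj: "\<And>i j. i \<in> {1..n} \<Longrightarrow> j \<in> {1..n} \<Longrightarrow> i \<noteq> j \<Longrightarrow> A i \<inter> A j = {}"
    and "i \<in> {1..n}" "z \<in> A i"
  shows "collapse_pt n A z = A i"
proof -
  have ex: "\<exists>i\<in>{1..n}. z \<in> A i" using assms by blast
  let ?j = "SOME i. i \<in> {1..n} \<and> z \<in> A i"
  have j: "?j \<in> {1..n} \<and> z \<in> A ?j" by (rule someI_ex) (use ex in blast)
  then have "?j = i" using disj[of ?j i] assms by blast
  then show ?thesis unfolding collapse_pt_def using ex by simp
qed

lemma cp_eq:
  assumes "collapse_pt n A x = collapse_pt n A y"
  shows "x = y \<or> (\<exists>i\<in>{1..n}. x \<in> A i \<and> y \<in> A i)"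
proof (cases "\<exists>i\<in>{1..n}. x \<in> A i")
  case True
  let ?j = "SOME i. i \<in> {1..n} \<and> x \<in> A i"
  have j: "?j \<in> {1..n} \<and> x \<in> A ?j" by (rule someI_ex) (use True in blast)
  have px: "collapse_pt n A x = A ?j" unfolding collapse_pt_def using True by simp
  show ?thesis
  proof (cases "\<exists>i\<in>{1..n}. y \<in> A i")
    case True
    let ?k = "SOME i. i \<in> {1..n} \<and> y \<in> A i"
    have k: "?k \<in> {1..n} \<and> y \<in> A ?k" by (rule someI_ex) (use True in blast)
    have "collapse_pt n A y = A ?k" unfolding collapse_pt_def using True by simp
    with px assms have "A ?j = A ?k" by simp
    with j k show ?thesis by auto
  next
    case False
    then have "collapse_pt n A y = {y}" unfolding collapse_pt_def by simp
    with px assms have "A ?j = {y}" by simp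
    with j show ?thesis by auto
  qed
next
  case False
  then have px: "collapse_pt n A x = {x}" unfolding collapse_pt_def by simp
  show ?thesis
  proof (cases "\<exists>i\<in>{1..n}. y \<in> A i")
    case True
    let ?k = "SOME i. i \<in> {1..n} \<and> y \<in> A i"
    have k: "?k \<in> {1..n} \<and> y \<in> A ?k" by (rule someI_ex) (use True in blast)
    have "collapse_pt n A y = A ?k" unfolding collapse_pt_def using True by simp
    with px assms have "A ?k = {x}" by simp
    with k show ?thesis by auto
  next
    case False
    then have "collapse_pt n A y = {y}" unfolding collapse_pt_def by simp
    with px assms show ?thesis by simp
  qed
qed

end


context
  fixes X :: "'a topology" and n :: nat and A :: "nat \<Rightarrow> 'a set"
  assumes lpc: "locally_path_connected_space X"
    and disj: "\<And>i j. i \<in> {1..n} \<Longrightarrow> j \<in> {1..n} \<Longrightarrow> i \<noteq> j \<Longrightarrow> A i \<inter> A j = {}"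
    and pc: "\<And>i. i \<in> {1..n} \<Longrightarrow> path_connectedin X (A i)"
begin

abbreviation "pp \<equiv> collapse_pt n A"
abbreviation "YY \<equiv> collapse_space X n A"

lemma YY_topspace: "topspace YY = pp ` topspace X"
  unfolding collapse_space_def by (rule quot_top_topspace)

lemma YY_openin: "openin YY U \<longleftrightarrow> U \<subseteq> pp ` topspace X \<and> openin X {x \<in> topspace X. pp x \<in> U}"
  unfolding collapse_space_def by (rule quot_top_openin)

lemma pp_cont: "continuous_map X YY pp"
  unfolding collapse_space_def by (rule quot_top_cont)

lemma saturated:
  assumes "c \<in> path_component_of_set (subtopology X {x \<in> topspace X. pp x \<in> V}) x0"
    and "y \<in> topspace X" "pp y = pp c"
  shows "y \<in> path_component_of_set (subtopology X {x \<in> topspace X. pp x \<in> V}) x0"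
proof -
  let ?W = "{x \<in> topspace X. pp x \<in> V}"
  have cW: "c \<in> ?W" using path_component_in_topspace[OF assms(1)[simplified]] by auto
  show ?thesis
  proof (cases "y = c")
    case True then show ?thesis using assms by simp
  next
    case False
    then obtain i where i: "i \<in> {1..n}" "y \<in> A i" "c \<in> A i" using cp_eq[OF assms(3)] by blast
    have Asub: "A i \<subseteq> topspace X" using pc[OF i(1)] path_connectedin_subset_topspace by blast
    have "A i \<subseteq> ?W"
    proof
      fix z assume "z \<in> A i"
      then have "pp z = pp c" using cp_in[OF disj i(1)] i by simp
      with cW \<open>z \<in> A i\<close> Asub show "z \<in> ?W" by auto
    qed
    then have "path_connectedin (subtopology X ?W) (A i)"
      using pc[OF i(1)] by (simp add: path_connectedin_subtopology)
    then have "path_component_of (subtopology X ?W) c y"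
      using i path_component_of by metis
    then show ?thesis using assms(1) path_component_of_trans by fastforce
  qed
qed

lemma comp_open:
  assumes V: "openin YY V" and x0: "x0 \<in> topspace X" "pp x0 \<in> V"
  defines "C \<equiv> path_component_of_set (subtopology X {x \<in> topspace X. pp x \<in> V}) x0"
  shows "openin YY (pp ` C)" "pp x0 \<in> pp ` C" "C \<subseteq> topspace X"
proof -
  let ?W = "{x \<in> topspace X. pp x \<in> V}"
  have Wo: "openin X ?W" using V YY_openin by blast
  have "openin (subtopology X ?W) C" unfolding C_def
    by (rule openin_path_component_of_locally_path_connected_space)
       (rule locally_path_connected_space_open_subset[OF lpc Wo])
  then have Co: "openin X C" using Wo openin_trans_full by blast
  show Csub: "C \<subseteq> topspace X" using openin_subset[OF Co] .
  have "{x \<in> topspace X. pp x \<in> pp ` C} = C"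
  proof
    show "{x \<in> topspace X. pp x \<in> pp ` C} \<subseteq> C"
      using saturated unfolding C_def by fastforce
    show "C \<subseteq> {x \<in> topspace X. pp x \<in> pp ` C}" using Csub by auto
  qed
  then show "openin YY (pp ` C)" using Co Csub YY_openin by auto
  have "x0 \<in> C" unfolding C_def using x0
    by (simp add: path_component_of_refl)
  then show "pp x0 \<in> pp ` C" by blast
qed

lemma main_approx:
  assumes f: "f \<in> loops YY (pp a)" and a: "a \<in> topspace X"
    and P: "finite P" "\<And>K U. (K, U) \<in> P \<Longrightarrow> compactin (top_of_set {0..1}) K \<and> openin YY U \<and> f ` K \<subseteq> U"
  shows "\<exists>h\<in>loops X a. \<forall>(K, U)\<in>P. (pp \<circ> h) ` K \<subseteq> U"
proof -
  have fpath: "pathin YY f" and f0: "f 0 = pp a" and f1: "f 1 = pp a" using f unfolding loops_def by auto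
  have fY: "f t \<in> topspace YY" if "t \<in> {0..1}" for t
    using fpath that unfolding pathin_def continuous_map_def by auto
  define V where "V s = topspace YY \<inter> \<Inter>(snd ` {q \<in> P. s \<in> fst q})" for s
  have Vo: "openin YY (V s)" for s
    unfolding V_def by (rule openin_Int_Inter) (use P in \<open>auto\<close>)
  have fV: "f s \<in> V s" if "s \<in> {0..1}" for s
    unfolding V_def using fY[OF that] P(2) by fastforce
  have VU: "V s \<subseteq> U" if "(K, U) \<in> P" "s \<in> K" for s K U
    unfolding V_def using that by force
  define xs where "xs s = (SOME x. x \<in> topspace X \<and> pp x = f s)" for s
  have xs: "xs s \<in> topspace X \<and> pp (xs s) = f s" if "s \<in> {0..1}" for s
  proof -
    have "\<exists>x. x \<in> topspace X \<and> pp x = f s" using fY[OF that] YY_topspace by auto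
    then show ?thesis unfolding xs_def by (rule someI_ex)
  qed
  define W where "W s = {x \<in> topspace X. pp x \<in> V s}" for s
  define C where "C s = path_component_of_set (subtopology X (W s)) (xs s)" for s
  have Cprops: "openin YY (pp ` C s)" "f s \<in> pp ` C s" "C s \<subseteq> topspace X" if "s \<in> {0..1}" for s
    using comp_open[OF Vo, of "xs s" s] xs[OF that] fV[OF that] unfolding C_def W_def by auto
  have sat: "y \<in> C s" if "y \<in> topspace X" "pp y \<in> pp ` C s" for y s
    using that saturated unfolding C_def W_def by blast
  have preo: "openin (top_of_set {0..1}) {t \<in> {0..1}. f t \<in> pp ` C s}" if "s \<in> {0..1}" for s
  proof -
    have "openin (top_of_set {0..1}) {t \<in> topspace (top_of_set {0..1}). f t \<in> pp ` C s}"
      using fpath Cprops(1)[OF that] unfolding pathin_def continuous_map_def by blast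
    then show ?thesis by simp
  qed
  define Op where "Op s = (SOME T. open T \<and> {t \<in> {0..1}. f t \<in> pp ` C s} = {0..1} \<inter> T)" for s
  have Op: "open (Op s) \<and> {t \<in> {0..1}. f t \<in> pp ` C s} = {0..1} \<inter> Op s" if "s \<in> {0..1}" for s
  proof -
    have "\<exists>T. open T \<and> {t \<in> {0..1}. f t \<in> pp ` C s} = {0..1} \<inter> T"
      using preo[OF that] openin_open by blast
    then show ?thesis unfolding Op_def by (rule someI_ex)
  qed
  have Kc: "compact K" if "(K, U) \<in> P" for K U
    using P(2)[OF that] by (simp add: compactin_subtopology)
  define N where "N s = Op s \<inter> \<Inter>((\<lambda>q. - fst q) ` {q \<in> P. s \<notin> fst q})" for s
  have No: "open (N s)" if "s \<in> {0..1}" for s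
    unfolding N_def
  proof (rule open_Int)
    show "open (Op s)" using Op[OF that] by blast
    show "open (\<Inter>((\<lambda>q. - fst q) ` {q \<in> P. s \<notin> fst q}))"
      by (rule open_Inter) (use P(1) Kc compact_imp_closed in \<open>auto\<close>)
  qed
  have sN: "s \<in> N s" if "s \<in> {0..1}" for s
    unfolding N_def using Op[OF that] Cprops(2)[OF that] that by auto
  have NK: "s \<in> K" if "(K, U) \<in> P" "t \<in> N s" "t \<in> K" for s t K U
    using that unfolding N_def by force
  have NC: "f t \<in> pp ` C s" if "s \<in> {0..1}" "t \<in> N s" "t \<in> {0..1}" for s t
    using Op[OF that(1)] that unfolding N_def by blast
  obtain \<delta> where \<delta>: "0 < \<delta>" "\<And>T. \<lbrakk>T \<subseteq> {0..1}; diameter T < \<delta>\<rbrakk> \<Longrightarrow> \<exists>B \<in> N ` {0..1}. T \<subseteq> B"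
  proof (rule Lebesgue_number_lemma[of "{0..1::real}" "N ` {0..1}"])
    show "{0..1::real} \<subseteq> \<Union> (N ` {0..1})" using sN by blast
  qed (use No in auto)

  obtain M :: nat where M: "M > 0" "inverse (real M) < \<delta>" using ex_inverse_of_nat_less[OF \<delta>(1)] by auto
  have Mpos: "real M > 0" using M by simp
  define T where "T k = {real k / real M .. real (Suc k) / real M}" for k
  have Tsub: "T k \<subseteq> {0..1}" if "k < M" for k
  proof -
    have "real (Suc k) \<le> real M" using that by simp
    then have "real (Suc k) / real M \<le> 1" using Mpos by simp
    then show ?thesis unfolding T_def using Mpos by auto
  qed
  have Tmem: "t \<in> T k \<longleftrightarrow> real k \<le> real M * t \<and> real M * t \<le> real k + 1" for t k
    unfolding T_def using Mpos by (simp add: divide_le_eq le_divide_eq mult.commute add.commute)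
  have skex: "\<exists>s\<in>{0..1}. T k \<subseteq> N s" if "k < M" for k
  proof -
    have "diameter (T k) = inverse (real M)" unfolding T_def using Mpos
      by (simp add: diff_divide_distrib[symmetric] divide_inverse algebra_simps)
    then have "diameter (T k) < \<delta>" using M by simp
    then show ?thesis using \<delta>(2)[OF Tsub[OF that]] by blast
  qed
  define sk where "sk k = (SOME s. s \<in> {0..1} \<and> T k \<subseteq> N s)" for k
  have sk: "sk k \<in> {0..1} \<and> T k \<subseteq> N (sk k)" if "k < M" for k
    unfolding sk_def by (rule someI_ex) (use skex[OF that] in blast)
  define pt where "pt k = (if k = 0 \<or> k = M then a else xs (real k / real M))" for k
  have pt: "pt k \<in> topspace X \<and> pp (pt k) = f (real k / real M)" if "k \<le> M" for k
  proof (cases "k = 0 \<or> k = M")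
    case True
    then show ?thesis unfolding pt_def using a f0 f1 Mpos by auto
  next
    case False
    have "real k / real M \<in> {0..1}" using that Mpos by (auto simp: divide_le_eq)
    then show ?thesis unfolding pt_def using False xs by simp
  qed
  have ptC: "pt j \<in> C (sk k)" if "k < M" "j = k \<or> j = Suc k" for j k
  proof -
    have jM: "j \<le> M" using that by auto
    have "real j / real M \<in> T k" using that Mpos unfolding Tmem by auto
    moreover have "real j / real M \<in> {0..1}" using jM Mpos by (auto simp: divide_le_eq)
    ultimately have "f (real j / real M) \<in> pp ` C (sk k)"
      using NC sk[OF that(1)] by blast
    then show ?thesis using sat pt[OF jM] by metis
  qed
  have gex: "\<exists>g. pathin (subtopology X (W (sk k))) g \<and> g 0 = pt k \<and> g 1 = pt (Suc k)" if "k < M" for k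
  proof -
    have "path_component_of (subtopology X (W (sk k))) (xs (sk k)) (pt k)"
      "path_component_of (subtopology X (W (sk k))) (xs (sk k)) (pt (Suc k))"
      using ptC[OF that] unfolding C_def by auto
    then have "path_component_of (subtopology X (W (sk k))) (pt k) (pt (Suc k))"
      using path_component_of_sym path_component_of_trans by metis
    then show ?thesis unfolding path_component_of_def by blast
  qed
  define \<gamma> where "\<gamma> k = (SOME g. pathin (subtopology X (W (sk k))) g \<and> g 0 = pt k \<and> g 1 = pt (Suc k))" for k
  have \<gamma>: "pathin X (\<gamma> k) \<and> \<gamma> k 0 = pt k \<and> \<gamma> k 1 = pt (Suc k) \<and> (\<forall>u\<in>{0..1}. \<gamma> k u \<in> W (sk k))" if "k < M" for k
  proof -
    have "pathin (subtopology X (W (sk k))) (\<gamma> k) \<and> \<gamma> k 0 = pt k \<and> \<gamma> k 1 = pt (Suc k)"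
      unfolding \<gamma>_def by (rule someI_ex[OF gex[OF that]])
    then show ?thesis by (simp add: pathin_subtopology)
  qed
  have cover: "\<exists>k<M. t \<in> T k" if t: "t \<in> {0..1}" for t
  proof (cases "t = 1")
    case True
    have "Suc (M - 1) = M" using M by simp
    then have "t \<in> T (M - 1)" unfolding Tmem using True M by (simp add: of_nat_diff)
    then show ?thesis using M by (intro exI[of _ "M - 1"]) auto
  next
    case False
    define k where "k = nat \<lfloor>real M * t\<rfloor>"
    have fl0: "0 \<le> \<lfloor>real M * t\<rfloor>" using t Mpos by simp
    have k1: "real k \<le> real M * t" unfolding k_def using fl0 by simp
    have k2: "real M * t < real k + 1" unfolding k_def using fl0 by linarith
    have "real M * t < real M" using t False Mpos by simp
    then have "k < M" using k1 by linarith
    then show ?thesis using k1 k2 unfolding Tmem by auto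
  qed
  have clo: "closedin (top_of_set {0..1}) (T k)" if "k \<in> {..<M}" for k
    unfolding closedin_closed using Tsub[of k] that by (intro exI[of _ "T k"]) (auto simp: T_def)
  have cont: "continuous_map (subtopology (top_of_set {0..1}) (T k)) X (\<lambda>t. \<gamma> k (real M * t - real k))"
    if "k \<in> {..<M}" for k
  proof -
    have k: "k < M" using that by simp
    have e: "subtopology (top_of_set {0..1}) (T k) = top_of_set (T k)"
      using Tsub[OF k] by (simp add: subtopology_subtopology Int_absorb1)
    have aff: "continuous_map (top_of_set (T k)) (top_of_set {0..1}) (\<lambda>t. real M * t - real k)"
      by (auto simp: Tmem intro!: continuous_intros)
    have "continuous_map (top_of_set (T k)) X (\<gamma> k \<circ> (\<lambda>t. real M * t - real k))"
      using continuous_map_compose[OF aff] \<gamma>[OF k] unfolding pathin_def by blast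
    then show ?thesis using e by (simp add: o_def)
  qed
  have compat1: "\<gamma> i (real M * t - real i) = \<gamma> j (real M * t - real j)"
    if "i < M" "j < M" "i < j" "t \<in> T i" "t \<in> T j" for i j t
  proof -
    have "real j \<le> real i + 1" using that(4,5) unfolding Tmem by linarith
    then have "j = Suc i" using that(3) by linarith
    then have "real M * t = real j" using that(4,5) unfolding Tmem by simp
    then have "real M * t - real i = 1" "real M * t - real j = 0" using \<open>j = Suc i\<close> by simp_all
    then show ?thesis using \<gamma>[OF that(1)] \<gamma>[OF that(2)] \<open>j = Suc i\<close> by simp
  qed
  have compat: "\<gamma> i (real M * t - real i) = \<gamma> j (real M * t - real j)"
    if "i \<in> {..<M}" "j \<in> {..<M}" "t \<in> topspace (top_of_set {0..1}) \<inter> T i \<inter> T j" for i j t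
  proof -
    consider "i < j" | "i = j" | "j < i" by linarith
    then show ?thesis using compat1[of i j t] compat1[of j i t] that by (cases) auto
  qed
  have cover': "topspace (top_of_set {0..1}) \<subseteq> \<Union> (T ` {..<M})" using cover by fastforce
  obtain h where hc: "continuous_map (top_of_set {0..1}) X h"
    and heq: "\<And>t k. \<lbrakk>k \<in> {..<M}; t \<in> topspace (top_of_set {0..1}) \<inter> T k\<rbrakk> \<Longrightarrow> h t = \<gamma> k (real M * t - real k)"
    by (rule pasting_lemma_exists_closed[OF finite_lessThan cover' clo cont compat]) blast+
  have h0: "h 0 = a"
  proof -
    have "(0::real) \<in> T 0" unfolding Tmem by simp
    then have "h 0 = \<gamma> 0 0" using heq[of 0 0] M by simp
    then show ?thesis using \<gamma>[of 0] M unfolding pt_def by simp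
  qed
  have h1: "h 1 = a"
  proof -
    have s: "Suc (M - 1) = M" using M by simp
    have r: "real (M - 1) = real M - 1" using M by (simp add: of_nat_diff)
    have "(1::real) \<in> T (M - 1)" unfolding Tmem using r by simp
    then have "h 1 = \<gamma> (M - 1) 1" using heq[of "M - 1" 1] M r by simp
    then show ?thesis using \<gamma>[of "M - 1"] M s unfolding pt_def by simp
  qed
  have hloop: "h \<in> loops X a" unfolding loops_def pathin_def using hc h0 h1 by simp
  have "(pp \<circ> h) ` K \<subseteq> U" if KU: "(K, U) \<in> P" for K U
  proof
    fix y assume "y \<in> (pp \<circ> h) ` K"
    then obtain t where t: "t \<in> K" "y = pp (h t)" by auto
    have "K \<subseteq> topspace (top_of_set {0..1::real})"
      using compactin_subset_topspace[OF conjunct1[OF P(2)[OF KU]]] .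
    then have t01: "t \<in> {0..1}" using t by auto
    obtain k where k: "k < M" "t \<in> T k" using cover[OF t01] by blast
    have ht: "h t = \<gamma> k (real M * t - real k)" using heq[of k t] k t01 by simp
    have "real M * t - real k \<in> {0..1}" using k(2) unfolding Tmem by simp
    then have "h t \<in> W (sk k)" using \<gamma>[OF k(1)] ht by simp
    then have "pp (h t) \<in> V (sk k)" unfolding W_def by simp
    moreover have "sk k \<in> K" using NK[OF KU _ t(1)] sk[OF k(1)] k(2) by blast
    ultimately show "y \<in> U" using VU[OF KU] t by blast
  qed
  then show ?thesis using hloop by blast
qed


end


theorem corollary3p12:
  fixes X :: "'a topology" and n :: nat and A :: "nat \<Rightarrow> 'a set" and a :: 'a
  assumes "first_countable X" and "connected_space X" and "locally_path_connected_space X"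
    and "\<And>i j. i \<in> {1..n} \<Longrightarrow> j \<in> {1..n} \<Longrightarrow> i \<noteq> j \<Longrightarrow> A i \<inter> A j = {}"
    and "\<And>i. i \<in> {1..n} \<Longrightarrow> path_connectedin X (A i)"
    and "\<And>i. i \<in> {1..n} \<Longrightarrow> closedin X (A i)"
    and "a \<in> (\<Union>i\<in>{1..n}. A i)"
  shows "(pi1_top (collapse_space X n A) (collapse_pt n A a)) closure_of
           (induced_image X (collapse_space X n A) (collapse_pt n A) a)
         = topspace (pi1_top (collapse_space X n A) (collapse_pt n A a))"
proof -
  let ?Y = "collapse_space X n A" and ?p = "collapse_pt n A"
  let ?y = "?p a"
  let ?SB = "{{g. g ` K \<subseteq> U} | K U. compactin (top_of_set {0..1::real}) K \<and> openin ?Y U}"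
  let ?L = "loop_space ?Y ?y"
  have a: "a \<in> topspace X"
    using assms(7) assms(5) path_connectedin_subset_topspace by blast
  have UN: "\<Union>?SB = UNIV"
  proof -
    have "{g. g ` {} \<subseteq> {}} \<in> ?SB" by blast
    then show ?thesis by auto
  qed
  have Ltop: "topspace ?L = loops ?Y ?y"
    unfolding loop_space_def topspace_subtopology topology_generated_by_topspace UN by simp
  have Lopen: "\<exists>F. finite F \<and> F \<subseteq> ?SB \<and> f \<in> \<Inter>F \<and> \<Inter>F \<inter> loops ?Y ?y \<subseteq> S"
    if "openin ?L S" "f \<in> S" for S f
  proof -
    have eqL: "?L = subtopology (topology_generated_by ?SB) (loops ?Y ?y)"
      unfolding loop_space_def by (rule refl)
    have "\<exists>T. openin (topology_generated_by ?SB) T \<and> S = T \<inter> loops ?Y ?y"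
      using that(1) by (simp only: eqL openin_subtopology)
    then obtain T where T: "openin (topology_generated_by ?SB) T" "S = T \<inter> loops ?Y ?y"
      by (elim exE conjE)
    have "generate_topology_on ?SB T" using T(1) openin_topology_generated_by_iff by blast
    moreover have "f \<in> T" using that(2) T(2) by blast
    ultimately obtain F where F: "finite F" "F \<subseteq> ?SB" "f \<in> \<Inter>F" "\<Inter>F \<subseteq> T"
      using gen_top_local by (metis (no_types, lifting))
    have "\<Inter>F \<inter> loops ?Y ?y \<subseteq> S" using F(4) T(2) by (simp only: Int_mono subset_refl)
    then show ?thesis using F(1,2,3) by (intro exI[of _ F] conjI)
  qed
  show ?thesis
  proof (rule equalityI)
    show "pi1_top ?Y ?y closure_of induced_image X ?Y ?p a \<subseteq> topspace (pi1_top ?Y ?y)"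
      by (rule closure_of_subset_topspace)
    show "topspace (pi1_top ?Y ?y) \<subseteq> pi1_top ?Y ?y closure_of induced_image X ?Y ?p a"
    proof
      fix c assume c: "c \<in> topspace (pi1_top ?Y ?y)"
      then obtain f where f: "f \<in> loops ?Y ?y" "c = loop_class ?Y ?y f"
        unfolding pi1_top_def quot_top_topspace Ltop by auto
      show "c \<in> pi1_top ?Y ?y closure_of induced_image X ?Y ?p a"
        unfolding in_closure_of
      proof (intro conjI allI impI)
        show "c \<in> topspace (pi1_top ?Y ?y)" by (rule c)
        fix T assume T: "c \<in> T \<and> openin (pi1_top ?Y ?y) T"
        then have To: "openin ?L {g \<in> topspace ?L. loop_class ?Y ?y g \<in> T}"
          unfolding pi1_top_def quot_top_openin by blast
        have fin: "f \<in> {g \<in> topspace ?L. loop_class ?Y ?y g \<in> T}" using f T Ltop by simp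
        obtain F where F: "finite F" "F \<subseteq> ?SB" "f \<in> \<Inter>F"
          "\<Inter>F \<inter> loops ?Y ?y \<subseteq> {g \<in> topspace ?L. loop_class ?Y ?y g \<in> T}"
          using Lopen[OF To fin] by blast
        define pr where "pr S = (SOME q. compactin (top_of_set {0..1::real}) (fst q) \<and> openin ?Y (snd q)
                                   \<and> S = {g. g ` fst q \<subseteq> snd q})" for S
        have prS: "compactin (top_of_set {0..1::real}) (fst (pr S)) \<and> openin ?Y (snd (pr S))
                    \<and> S = {g. g ` fst (pr S) \<subseteq> snd (pr S)}" if "S \<in> F" for S
        proof -
          have "\<exists>q. compactin (top_of_set {0..1::real}) (fst q) \<and> openin ?Y (snd q)
                    \<and> S = {g. g ` fst q \<subseteq> snd q}"
          proof -
            have "S \<in> ?SB" by (rule subsetD[OF F(2) that])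
            then obtain K U where KU: "S = {g. g ` K \<subseteq> U}" "compactin (top_of_set {0..1::real}) K" "openin ?Y U"
              by (elim CollectE exE conjE) (simp only:)
            show ?thesis using KU by (intro exI[of _ "(K, U)"]) simp
          qed
          then show ?thesis unfolding pr_def by (rule someI_ex)
        qed
        define P where "P = pr ` F"
        have Pf: "finite P" unfolding P_def using F(1) by simp
        have Pp: "compactin (top_of_set {0..1}) K \<and> openin ?Y U \<and> f ` K \<subseteq> U" if KUP: "(K, U) \<in> P" for K U
        proof -
          obtain S where S0: "(K, U) = pr S" "S \<in> F" using KUP[unfolded P_def] by (rule imageE)
          then have S: "S \<in> F" "pr S = (K, U)" by simp_all
          then have "compactin (top_of_set {0..1::real}) K \<and> openin ?Y U \<and> S = {g. g ` K \<subseteq> U}"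
            using prS[OF S(1)] by simp
          moreover have "f \<in> S" using F(3) S(1) by blast
          ultimately show ?thesis by blast
        qed
        obtain h where h: "h \<in> loops X a" "\<forall>(K, U)\<in>P. (?p \<circ> h) ` K \<subseteq> U"
          using main_approx[OF assms(3) assms(4) assms(5) f(1) a Pf Pp] by blast
        have hF: "?p \<circ> h \<in> \<Inter>F"
        proof
          fix S assume S: "S \<in> F"
          then have "pr S \<in> P" unfolding P_def by blast
          then have "(?p \<circ> h) ` fst (pr S) \<subseteq> snd (pr S)" using h(2)
            by (metis (mono_tags, lifting) case_prod_beta)
          then show "?p \<circ> h \<in> S" using prS[OF S] by blast
        qed
        have hL: "?p \<circ> h \<in> loops ?Y ?y"
        proof -
          have "pathin X h" "h 0 = a" "h 1 = a" using h(1) unfolding loops_def by auto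
          moreover have "continuous_map X ?Y ?p"
            unfolding collapse_space_def by (rule quot_top_cont)
          ultimately show ?thesis unfolding loops_def pathin_def
            using continuous_map_compose by fastforce
        qed
        have "loop_class ?Y ?y (?p \<circ> h) \<in> T" using F(4) hF hL by blast
        moreover have "loop_class ?Y ?y (?p \<circ> h) \<in> induced_image X ?Y ?p a"
          unfolding induced_image_def using h(1) by blast
        ultimately show "\<exists>y. y \<in> induced_image X ?Y ?p a \<and> y \<in> T" by blast
      qed
    qed
  qed
qed

end
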